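(* For every positive integer $n$, the number $A_n=\frac{8(10^{2^n}-1)}{9}$ (whose decimal representation consists of $2^n$ digits all equal to $8$) is a practical number.
   Context: A positive integer $N$ is called a practical number if every integer in $[1,N]$ can be expressed as a sum of distinct positive divisors of $N$. *)

theory Defs
  imports Main
begin

definition practical :: "nat \<Rightarrow> bool" where
  "practical N \<longleftrightarrow> N > 0 \<and>
     (\<forall>m \<in> {1..N}. \<exists>S. S \<subseteq> {d. d dvd N \<and> d > 0} \<and> sum id S = m)"

end

theory Submission
  imports Defs
begin

definition R :: "nat \<Rightarrow> nat \<Rightarrow> bool" where
  "R N x \<longleftrightarrow> N > 0 \<and> (\<forall>k\<le>x. \<exists>S. S \<subseteq> {d. d dvd N \<and> d > 0} \<and> sum id S = k)"

lemma R_mono: "R N x \<Longrightarrow> y \<le> x \<Longrightarrow> R N y"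
  unfolding R_def by auto

lemma R_practical: "R N x \<Longrightarrow> N \<le> x \<Longrightarrow> practical N"
  unfolding R_def practical_def by auto

lemma R_one: "R 1 1"
  unfolding R_def
proof (intro conjI allI impI)
  fix k :: nat assume "k \<le> 1"
  then consider "k = 0" | "k = 1" by linarith
  then show "\<exists>S. S \<subseteq> {d. d dvd 1 \<and> d > 0} \<and> sum id S = k"
  proof cases
    case 1 then show ?thesis by (intro exI[of _ "{}"]) simp
  next
    case 2 then show ?thesis by (intro exI[of _ "{1}"]) simp
  qed
qed simp

lemma R_step:
  assumes R: "R N x" and mN: "N < m" and mx: "m \<le> x + 1"
  shows "R (N * m) ((m + 1) * x)"
proof -
  have N0: "N > 0" using R unfolding R_def by simp
  have m0: "m > 0" using mN by simp
  have rep: "\<And>k. k \<le> x \<Longrightarrow> \<exists>S. S \<subseteq> {d. d dvd N \<and> d > 0} \<and> sum id S = k"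
    using R unfolding R_def by simp
  have fin: "finite {d. d dvd N \<and> d > 0}"
    using N0 by (metis (no_types, lifting) finite_divisors_nat mem_Collect_eq rev_finite_subset subsetI)
  show ?thesis unfolding R_def
  proof (intro conjI allI impI)
    show "N * m > 0" using N0 m0 by simp
    fix k assume k: "k \<le> (m + 1) * x"
    define q where "q = min (k div m) x"
    define r where "r = k - m * q"
    have qx: "q \<le> x" unfolding q_def by simp
    have "q \<le> k div m" unfolding q_def by simp
    then have "m * q \<le> m * (k div m)" by (rule mult_le_mono2)
    also have "\<dots> \<le> k" by simp
    finally have mq: "m * q \<le> k" .
    have rx: "r \<le> x"
    proof (cases "k div m \<le> x")
      case True
      then have "q = k div m" unfolding q_def by simp
      then have "r = k mod m" unfolding r_def by (metis minus_mult_div_eq_mod)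
      moreover have "k mod m < m" using m0 by simp
      ultimately show ?thesis using mx by linarith
    next
      case False
      then have "q = x" unfolding q_def by simp
      then show ?thesis unfolding r_def using k by (simp add: algebra_simps)
    qed
    obtain S1 where S1: "S1 \<subseteq> {d. d dvd N \<and> d > 0}" "sum id S1 = q" using rep qx by blast
    obtain S2 where S2: "S2 \<subseteq> {d. d dvd N \<and> d > 0}" "sum id S2 = r" using rep rx by blast
    have f1: "finite S1" using S1 fin finite_subset by blast
    have f2: "finite S2" using S2 fin finite_subset by blast
    have disj: "((\<lambda>d. m * d) ` S1) \<inter> S2 = {}"
    proof (rule ccontr)
      assume "((\<lambda>d. m * d) ` S1) \<inter> S2 \<noteq> {}"
      then obtain d e where d: "d \<in> S1" and e: "e \<in> S2" and de: "m * d = e" by blast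
      have "d > 0" using d S1 by auto
      then have "m * 1 \<le> m * d" by (intro mult_le_mono2) simp
      then have "m \<le> e" using de by simp
      moreover have "e \<le> N" using e S2 N0 by (auto intro: dvd_imp_le)
      ultimately show False using mN by simp
    qed
    have inj: "inj_on (\<lambda>d. m * d) S1" using m0 by (auto simp: inj_on_def)
    have s1: "sum id ((\<lambda>d. m * d) ` S1) = m * q"
    proof -
      have "sum id ((\<lambda>d. m * d) ` S1) = (\<Sum>d\<in>S1. m * d)" by (simp add: sum.reindex[OF inj])
      also have "\<dots> = m * sum id S1" by (simp add: sum_distrib_left)
      finally show ?thesis using S1(2) by simp
    qed
    have "sum id ((\<lambda>d. m * d) ` S1 \<union> S2) = m * q + r"
      using sum.union_disjoint[OF finite_imageI[OF f1] f2 disj, of id] s1 S2(2) by metis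
    also have "\<dots> = k" unfolding r_def using mq by simp
    finally have sum: "sum id ((\<lambda>d. m * d) ` S1 \<union> S2) = k" .
    have sub: "(\<lambda>d. m * d) ` S1 \<union> S2 \<subseteq> {d. d dvd N * m \<and> d > 0}"
      using S1(1) S2(1) m0 by (auto simp: mult.commute mult_dvd_mono)
    show "\<exists>S. S \<subseteq> {d. d dvd N * m \<and> d > 0} \<and> sum id S = k"
      using sub sum by blast
  qed
qed

lemma R8: "R 8 15"
proof -
  have "R 2 3" using R_step[OF R_one, of 2] by simp
  then show ?thesis using R_step[of 2 3 4] by simp
qed

lemma mod9: "(10::nat) ^ j mod 9 = 1"
proof -
  have "(10::nat) ^ j mod 9 = (10 mod 9) ^ j mod 9" by (rule power_mod[symmetric])
  then show ?thesis by simp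
qed

lemma main: "R (8 * (10 ^ (2 ^ k) - 1) div 9) (10 ^ (2 ^ k))"
proof (induction k)
  case 0
  then show ?case using R_mono[OF R8] by simp
next
  case (Suc k)
  define x :: nat where "x = 10 ^ (2 ^ k)"
  obtain t where t: "x - 1 = 9 * t"
    using mod9[of "2^k"] unfolding x_def
    by (metis dvd_def dvd_minus_mod minus_mod_eq_mult_div)
  have x1: "x \<ge> 1" unfolding x_def by simp
  have Nk: "8 * (x - 1) div 9 = 8 * t" using t by simp
  have IH: "R (8 * t) x" using Suc.IH Nk unfolding x_def by simp
  have lt: "8 * t < x + 1" using t x1 by linarith
  have st: "R (8 * t * (x + 1)) ((x + 1 + 1) * x)" using R_step[OF IH lt] by simp
  have xx: "10 ^ (2 ^ Suc k) = x * x" unfolding x_def by (simp add: power_mult[symmetric] power2_eq_square[symmetric] mult.commute)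
  have "x * x - 1 = (x - 1) * (x + 1)" by (simp add: algebra_simps)
  then have NS: "8 * (x * x - 1) div 9 = 8 * t * (x + 1)" using t by simp
  have le: "x * x \<le> (x + 1 + 1) * x" by (intro mult_le_mono1) simp
  show ?case unfolding xx NS by (rule R_mono[OF st le])
qed

theorem mainTheorem9:
  fixes n :: nat
  assumes "n \<ge> 1"
  shows "practical (8 * (10 ^ (2 ^ n) - 1) div 9)"
proof (rule R_practical[OF main])
  show "8 * (10 ^ 2 ^ n - 1) div 9 \<le> (10::nat) ^ 2 ^ n"
  proof -
    have "8 * (10 ^ 2 ^ n - 1) div 9 \<le> 9 * (10::nat) ^ 2 ^ n div 9" by (intro div_le_mono) simp
    then show ?thesis by simp
  qed
qed

end
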